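(* Let $a\ge1$, let $\mathcal{P}$ be either $\mathcal{Q}_{a,a}$ or $\mathcal{U}_a$, and let $\nu$ be any permutation of $[a]$. Define $\mathcal{R}(I)=\sum_{(i,j)\in I}(-1)^{i+j}$ for $I\in J(\mathcal{P})$. Then $\mathcal{R}$ is homomesic for $\mathcal{T}_\nu$ acting on $J(\mathcal{P})$.
   Context: $J(P)$ is the set of order ideals of a finite poset $P$. Toggle: $\sigma_x(I)=I\cup\{x\}$ if $x\notin I$ and $I\cup\{x\}\in J(P)$; $I\setminus\{x\}$ if $x\in I$ and $I\setminus\{x\}\in J(P)$; $I$ otherwise. For a chain $C=\{x_1<\dots<x_m\}$, $\sigma_C=\sigma_{x_1}\circ\cdots\circ\sigma_{x_m}$. $\mathcal{Q}_{a,a}=[a]\times[a]$ with componentwise order and columns $C_c=\{(c,j):j\in[a]\}$; $\mathcal{U}_a=\{(i,j)\in[a]^2: i+j\ge a+1\}$ with componentwise order and columns $C_c=\{(c,j): a+1-c\le j\le a\}$. Comotion: $\mathcal{T}_\nu=\sigma_{C_{\nu(a)}}\circ\cdots\circ\sigma_{C_{\nu(1)}}$. A function on a finite set with a permutation $\tau$ is homomesic if its average over every $\tau$-orbit is the same constant. *)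

theory Defs
  imports Complex_Main "HOL-Combinatorics.Permutations"
begin

definition cw_le :: "nat \<times> nat \<Rightarrow> nat \<times> nat \<Rightarrow> bool" where
  "cw_le x y \<longleftrightarrow> fst x \<le> fst y \<and> snd x \<le> snd y"

definition is_order_ideal :: "(nat \<times> nat) set \<Rightarrow> (nat \<times> nat) set \<Rightarrow> bool" where
  "is_order_ideal P I \<longleftrightarrow> I \<subseteq> P \<and> (\<forall>x\<in>I. \<forall>y\<in>P. cw_le y x \<longrightarrow> y \<in> I)"

definition ideals :: "(nat \<times> nat) set \<Rightarrow> (nat \<times> nat) set set" where
  "ideals P = {I. is_order_ideal P I}"

definition toggle :: "(nat \<times> nat) set \<Rightarrow> nat \<times> nat \<Rightarrow> (nat \<times> nat) set \<Rightarrow> (nat \<times> nat) set" where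
  "toggle P x I =
     (if x \<notin> I \<and> is_order_ideal P (insert x I) then insert x I
      else if x \<in> I \<and> is_order_ideal P (I - {x}) then I - {x}
      else I)"

(* sigma_C for a chain given as the list [x_1, ..., x_m] with x_1 < ... < x_m:
   sigma_{x_1} o ... o sigma_{x_m} *)
definition chain_toggle :: "(nat \<times> nat) set \<Rightarrow> (nat \<times> nat) list \<Rightarrow> (nat \<times> nat) set \<Rightarrow> (nat \<times> nat) set" where
  "chain_toggle P xs = foldr (toggle P) xs"

definition Qaa :: "nat \<Rightarrow> (nat \<times> nat) set" where
  "Qaa a = {(i, j). i \<in> {1..a} \<and> j \<in> {1..a}}"

definition Ua :: "nat \<Rightarrow> (nat \<times> nat) set" where
  "Ua a = {(i, j). i \<in> {1..a} \<and> j \<in> {1..a} \<and> i + j \<ge> a + 1}"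

definition colQ :: "nat \<Rightarrow> nat \<Rightarrow> (nat \<times> nat) list" where
  "colQ a c = map (\<lambda>j. (c, j)) [1..<a+1]"

definition colU :: "nat \<Rightarrow> nat \<Rightarrow> (nat \<times> nat) list" where
  "colU a c = map (\<lambda>j. (c, j)) [a+1-c..<a+1]"

(* Comotion T_nu = sigma_{C_nu(a)} o ... o sigma_{C_nu(1)}  (C_nu(1) applied first) *)
definition comotion :: "(nat \<times> nat) set \<Rightarrow> (nat \<Rightarrow> (nat \<times> nat) list) \<Rightarrow> nat \<Rightarrow> (nat \<Rightarrow> nat)
    \<Rightarrow> (nat \<times> nat) set \<Rightarrow> (nat \<times> nat) set" where
  "comotion P col a \<nu> = fold (\<lambda>k. chain_toggle P (col (\<nu> k))) [1..<a+1]"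

definition orbit_of :: "('a \<Rightarrow> 'a) \<Rightarrow> 'a \<Rightarrow> 'a set" where
  "orbit_of \<tau> x = {(\<tau> ^^ n) x | n. True}"

definition homomesic :: "'a set \<Rightarrow> ('a \<Rightarrow> 'a) \<Rightarrow> ('a \<Rightarrow> real) \<Rightarrow> bool" where
  "homomesic S \<tau> f \<longleftrightarrow> finite S \<and> bij_betw \<tau> S S \<and>
     (\<exists>c. \<forall>x\<in>S. (\<Sum>y\<in>orbit_of \<tau> x. f y) / real (card (orbit_of \<tau> x)) = c)"

definition Rstat :: "(nat \<times> nat) set \<Rightarrow> real" where
  "Rstat I = (\<Sum>(i, j)\<in>I. (-1) ^ (i + j))"

end

theory Submission
  imports Defs
begin

lemma toggle_ideal:
  assumes "is_order_ideal P I" shows "is_order_ideal P (toggle P x I)"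
  using assms unfolding toggle_def by simp

lemma toggle_invol:
  assumes "is_order_ideal P I" shows "toggle P x (toggle P x I) = I"
proof (cases "x \<notin> I \<and> is_order_ideal P (insert x I)")
  case True
  then show ?thesis using assms unfolding toggle_def by (auto simp: insert_absorb)
next
  case F1: False
  show ?thesis
  proof (cases "x \<in> I \<and> is_order_ideal P (I - {x})")
    case True
    then show ?thesis using F1 assms unfolding toggle_def by (auto simp: insert_absorb)
  next
    case False
    then show ?thesis using F1 unfolding toggle_def by auto
  qed
qed

lemma chain_toggle_ideal:
  "is_order_ideal P I \<Longrightarrow> is_order_ideal P (foldr (toggle P) xs I)"
  by (induction xs) (auto intro: toggle_ideal)

lemma chain_toggle_inj:
  "is_order_ideal P I \<Longrightarrow> is_order_ideal P J \<Longrightarrow> foldr (toggle P) xs I = foldr (toggle P) xs J \<Longrightarrow> I = J"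
proof (induction xs)
  case Nil then show ?case by simp
next
  case (Cons x xs)
  have "toggle P x (toggle P x (foldr (toggle P) xs I)) = toggle P x (toggle P x (foldr (toggle P) xs J))"
    using Cons.prems(3) by simp
  then have "foldr (toggle P) xs I = foldr (toggle P) xs J"
    using toggle_invol chain_toggle_ideal Cons.prems(1,2) by metis
  then show ?case using Cons by blast
qed

lemma fold_chain_ideal:
  "is_order_ideal P I \<Longrightarrow> is_order_ideal P (fold (\<lambda>k. chain_toggle P (col k)) ks I)"
  by (induction ks arbitrary: I) (auto simp: chain_toggle_def intro: chain_toggle_ideal)

lemma fold_chain_inj:
  "is_order_ideal P I \<Longrightarrow> is_order_ideal P J \<Longrightarrow>
   fold (\<lambda>k. chain_toggle P (col k)) ks I = fold (\<lambda>k. chain_toggle P (col k)) ks J \<Longrightarrow> I = J"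
proof (induction ks arbitrary: I J)
  case Nil then show ?case by simp
next
  case (Cons k ks)
  from Cons.prems(3) have "fold (\<lambda>k. chain_toggle P (col k)) ks (chain_toggle P (col k) I)
     = fold (\<lambda>k. chain_toggle P (col k)) ks (chain_toggle P (col k) J)" by simp
  then have "chain_toggle P (col k) I = chain_toggle P (col k) J"
    using Cons.IH Cons.prems(1,2) by (simp add: chain_toggle_def chain_toggle_ideal)
  then show ?case using chain_toggle_inj Cons.prems(1,2) unfolding chain_toggle_def by blast
qed

lemma comotion_bij:
  assumes "finite P"
  shows "finite (ideals P) \<and> bij_betw (comotion P col a \<nu>) (ideals P) (ideals P)"
proof -
  have fin: "finite (ideals P)"
    by (rule finite_subset[of _ "Pow P"]) (auto simp: ideals_def is_order_ideal_def assms)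
  have sub: "comotion P col a \<nu> ` ideals P \<subseteq> ideals P"
  proof
    fix J assume "J \<in> comotion P col a \<nu> ` ideals P"
    then obtain I where I: "I \<in> ideals P" "J = comotion P col a \<nu> I" by auto
    have "J = fold (\<lambda>k. chain_toggle P (col (\<nu> k))) [1..<a+1] I"
      using I(2) by (simp only: comotion_def)
    then show "J \<in> ideals P" using fold_chain_ideal[of P I "\<lambda>k. col (\<nu> k)"] I(1)
      by (simp add: ideals_def)
  qed
  have inj: "inj_on (comotion P col a \<nu>) (ideals P)"
  proof (rule inj_onI)
    fix I J assume "I \<in> ideals P" "J \<in> ideals P" "comotion P col a \<nu> I = comotion P col a \<nu> J"
    then show "I = J" using fold_chain_inj[of P I J "\<lambda>k. col (\<nu> k)" "[1..<a+1]"]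
      by (simp only: comotion_def ideals_def mem_Collect_eq)
  qed
  show ?thesis using fin sub inj endo_inj_surj[OF fin sub inj] by (simp add: bij_betw_def)
qed

section \<open>Periods of a bijection on a finite set\<close>

lemma funpow_in: "f ` S \<subseteq> S \<Longrightarrow> x \<in> S \<Longrightarrow> (f ^^ n) x \<in> S"
  by (induction n) auto

lemma funpow_cancel:
  assumes sub: "f ` S \<subseteq> S" and inj: "inj_on f S" and x: "x \<in> S"
  shows "(f ^^ i) x = (f ^^ (i + d)) x \<Longrightarrow> x = (f ^^ d) x"
proof (induction i)
  case 0 then show ?case by simp
next
  case (Suc i)
  have "f ((f ^^ i) x) = f ((f ^^ (i + d)) x)" using Suc.prems by simp
  moreover have "(f ^^ i) x \<in> S" "(f ^^ (i + d)) x \<in> S" using funpow_in[OF sub x] by auto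
  ultimately have "(f ^^ i) x = (f ^^ (i + d)) x" using inj by (auto simp: inj_on_def)
  then show ?case using Suc.IH by simp
qed

lemma period_exists:
  assumes fin: "finite S" and bij: "bij_betw f S S" and x: "x \<in> S"
  shows "\<exists>n>0. (f ^^ n) x = x"
proof -
  have sub: "f ` S \<subseteq> S" using bij by (auto simp: bij_betw_def)
  have "\<not> inj_on (\<lambda>n. (f ^^ n) x) {..card S}"
  proof
    assume "inj_on (\<lambda>n. (f ^^ n) x) {..card S}"
    then have "card ((\<lambda>n. (f ^^ n) x) ` {..card S}) = Suc (card S)" by (simp add: card_image)
    moreover have "(\<lambda>n. (f ^^ n) x) ` {..card S} \<subseteq> S" using funpow_in[OF sub x] by auto
    ultimately show False using card_mono[OF fin] by (metis Suc_n_not_le_n)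
  qed
  then obtain i0 j0 where ij0: "i0 \<noteq> j0" "(f ^^ i0) x = (f ^^ j0) x"
    unfolding inj_on_def by blast
  define i where "i = min i0 j0"
  define j where "j = max i0 j0"
  have ij: "i < j" "(f ^^ i) x = (f ^^ j) x" using ij0 unfolding i_def j_def
    by (auto simp: min_def max_def)
  have inj: "inj_on f S" using bij by (auto simp: bij_betw_def)
  have cancel: "\<And>i. (f ^^ i) x = (f ^^ (i + d)) x \<Longrightarrow> x = (f ^^ d) x" for d
  proof -
    fix i show "(f ^^ i) x = (f ^^ (i + d)) x \<Longrightarrow> x = (f ^^ d) x"
    proof (induction i)
      case 0 then show ?case by simp
    next
      case (Suc i)
      have "f ((f ^^ i) x) = f ((f ^^ (i + d)) x)" using Suc.prems by simp
      moreover have "(f ^^ i) x \<in> S" "(f ^^ (i + d)) x \<in> S" using funpow_in[OF sub x] by auto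
      ultimately have "(f ^^ i) x = (f ^^ (i + d)) x" using inj by (auto simp: inj_on_def)
      then show ?case using Suc.IH by simp
    qed
  qed
  have "x = (f ^^ (j - i)) x" using cancel[of i "j - i"] ij by simp
  then show ?thesis using ij(1) by (intro exI[of _ "j - i"]) auto
qed


section \<open>Height functions\<close>

locale base =
  fixes a :: nat and b :: "nat \<Rightarrow> nat"
  assumes b0: "b 0 = a" and bbig: "\<And>c. a < c \<Longrightarrow> b c = 0"
    and bmono: "\<And>c. 1 \<le> c \<Longrightarrow> c \<le> a \<Longrightarrow> b (Suc c) \<le> b c"
    and ble: "\<And>c. c \<le> a \<Longrightarrow> b c \<le> a"
begin

definition PS :: "(nat \<times> nat) set" where
  "PS = {(c,j). 1 \<le> c \<and> c \<le> a \<and> b c < j \<and> j \<le> a}"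

definition st :: "(nat \<Rightarrow> nat) \<Rightarrow> (nat \<times> nat) set" where
  "st h = (SIGMA c:{1..a}. {b c<..h c})"

definition vh :: "(nat \<Rightarrow> nat) \<Rightarrow> bool" where
  "vh h \<longleftrightarrow> h 0 = a \<and> (\<forall>c>a. h c = 0) \<and> (\<forall>c. 1 \<le> c \<and> c \<le> a \<longrightarrow> b c \<le> h c \<and> h c \<le> a)
     \<and> (\<forall>c. 1 \<le> c \<and> c < a \<longrightarrow> h (Suc c) \<le> h c)"

lemma vh_adj: assumes "vh h" shows "h (Suc c) \<le> h c"
proof (cases "c = 0")
  case True
  then show ?thesis using assms unfolding vh_def
    by (cases "a = 0") auto
next
  case False
  show ?thesis
  proof (cases "c < a")
    case True then show ?thesis using assms False unfolding vh_def by auto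
  next
    case False then show ?thesis using assms unfolding vh_def by auto
  qed
qed

lemma vh_anti: "vh h \<Longrightarrow> c \<le> c' \<Longrightarrow> h c' \<le> h c"
  using lift_Suc_antimono_le[of h] vh_adj by blast

lemma vh_le: "vh h \<Longrightarrow> h c \<le> a"
  using vh_anti[of h 0 c] unfolding vh_def by auto

lemma vh_ge: "vh h \<Longrightarrow> b c \<le> h c"
  unfolding vh_def using b0 bbig by (cases "c = 0"; cases "a < c"; force)

lemma mem_st: "(c,j) \<in> st h \<longleftrightarrow> 1 \<le> c \<and> c \<le> a \<and> b c < j \<and> j \<le> h c"
  by (auto simp: st_def)

lemma st_ideal: assumes "vh h" shows "is_order_ideal PS (st h)"
  unfolding is_order_ideal_def cw_le_def PS_def
proof (intro conjI ballI impI)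
  show "st h \<subseteq> {(c, j). 1 \<le> c \<and> c \<le> a \<and> b c < j \<and> j \<le> a}"
    using vh_le[OF assms] by (auto simp: mem_st) (meson le_trans)
next
  fix x y assume x: "x \<in> st h" and y: "y \<in> {(c, j). 1 \<le> c \<and> c \<le> a \<and> b c < j \<and> j \<le> a}"
    and le: "fst y \<le> fst x \<and> snd y \<le> snd x"
  obtain c j where xc: "x = (c,j)" by force
  obtain c' j' where yc: "y = (c',j')" by force
  have "h c \<le> h c'" using vh_anti[OF assms] le xc yc by auto
  then show "y \<in> st h" using x y le xc yc by (auto simp: mem_st)
qed

lemma ideal_st: assumes I: "is_order_ideal PS I" shows "\<exists>h. vh h \<and> I = st h"
proof -
  define h where "h c = (if c = 0 then a else if a < c then 0 else Max (insert (b c) {j. (c,j) \<in> I}))" for c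
  have Isub: "I \<subseteq> PS" using I by (simp add: is_order_ideal_def)
  have fin: "finite {j. (c,j) \<in> I}" for c
    by (rule finite_subset[of _ "{..a}"]) (use Isub in \<open>auto simp: PS_def\<close>)
  have hge: "c \<ge> 1 \<Longrightarrow> c \<le> a \<Longrightarrow> b c \<le> h c" for c
    using fin[of c] by (auto simp: h_def)
  have hle: "c \<ge> 1 \<Longrightarrow> c \<le> a \<Longrightarrow> h c \<le> a" for c
    using fin[of c] Isub ble[of c] by (auto simp: h_def PS_def)
  have inI: "(c,j) \<in> I \<Longrightarrow> j \<le> h c" for c j
    using fin[of c] Isub by (auto simp: h_def PS_def)
  have down: "(c,j) \<in> I \<Longrightarrow> (c,j') \<in> PS \<Longrightarrow> j' \<le> j \<Longrightarrow> (c,j') \<in> I" for c j j'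
    using I unfolding is_order_ideal_def cw_le_def by fastforce
  have memI: "(c,j) \<in> I \<longleftrightarrow> 1 \<le> c \<and> c \<le> a \<and> b c < j \<and> j \<le> h c" for c j
  proof
    assume "(c,j) \<in> I" then show "1 \<le> c \<and> c \<le> a \<and> b c < j \<and> j \<le> h c"
      using Isub inI by (auto simp: PS_def)
  next
    assume A: "1 \<le> c \<and> c \<le> a \<and> b c < j \<and> j \<le> h c"
    then have hc: "h c = Max (insert (b c) {j. (c,j) \<in> I})" by (simp add: h_def)
    have "h c \<in> insert (b c) {j. (c,j) \<in> I}" unfolding hc by (rule Max_in) (use fin in auto)
    moreover have "h c \<noteq> b c" using A by auto
    ultimately have "(c, h c) \<in> I" by auto
    moreover have "(c,j) \<in> PS" using A hle[of c] by (auto simp: PS_def)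
    ultimately show "(c,j) \<in> I" using down A by blast
  qed
  have mono: "1 \<le> c \<Longrightarrow> c < a \<Longrightarrow> h (Suc c) \<le> h c" for c
  proof -
    assume c: "1 \<le> c" "c < a"
    show "h (Suc c) \<le> h c"
    proof (cases "h (Suc c) \<le> b c")
      case True then show ?thesis using hge[of c] c by auto
    next
      case False
      have "h (Suc c) > b (Suc c)" using False bmono[of c] c by auto
      then have "(Suc c, h (Suc c)) \<in> I" using memI c by auto
      moreover have "(c, h (Suc c)) \<in> PS" using False c hle[of "Suc c"] by (auto simp: PS_def)
      ultimately have "(c, h (Suc c)) \<in> I" using I unfolding is_order_ideal_def cw_le_def by fastforce
      then show ?thesis using inI by blast
    qed
  qed
  have "vh h" unfolding vh_def using hge hle mono by (auto simp: h_def)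
  moreover have "I = st h" using memI by (auto simp: mem_st)
  ultimately show ?thesis by blast
qed

lemma st_inj: assumes "vh h" "vh h'" "st h = st h'" shows "h = h'"
proof
  fix c
  show "h c = h' c"
  proof (cases "1 \<le> c \<and> c \<le> a")
    case False then show ?thesis using assms(1,2) unfolding vh_def by (cases "c = 0") auto
  next
    case True
    have "\<not> h c < h' c" 
    proof
      assume "h c < h' c"
      then have "(c, h' c) \<in> st h'" using True vh_ge[OF assms(1), of c] by (auto simp: mem_st)
      moreover have "(c, h' c) \<notin> st h" using \<open>h c < h' c\<close> by (auto simp: mem_st)
      ultimately show False using assms(3) by simp
    qed
    moreover have "\<not> h' c < h c" 
    proof
      assume "h' c < h c"
      then have "(c, h c) \<in> st h" using True vh_ge[OF assms(2), of c] by (auto simp: mem_st)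
      moreover have "(c, h c) \<notin> st h'" using \<open>h' c < h c\<close> by (auto simp: mem_st)
      ultimately show False using assms(3) by simp
    qed
    ultimately show ?thesis by simp
  qed
qed

lemma ideals_eq: "ideals PS = st ` Collect vh"
  using ideal_st st_ideal by (auto simp: ideals_def)

lemma vh_upd:
  assumes "vh h" "1 \<le> c" "c \<le> a" "b c \<le> w" "w \<le> h (c - 1)" "h (Suc c) \<le> w"
  shows "vh (h(c := w))"
proof -
  have "w \<le> a" using assms(5) vh_le[OF assms(1)] le_trans by blast
  then show ?thesis using assms unfolding vh_def
    apply (intro conjI allI impI)
    apply (auto)
    done
qed


lemma not_ideal_witness:
  assumes "x \<in> S" "y \<in> PS" "cw_le y x" "y \<notin> S"
  shows "\<not> is_order_ideal PS S"
  using assms unfolding is_order_ideal_def by blast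

lemma toggle_st:
  assumes h: "vh h" and c: "1 \<le> c" "c \<le> a" and j: "b c < j" "j \<le> a"
  shows "toggle PS (c,j) (st h) = (if j = Suc (h c) \<and> j \<le> h (c-1) then st (h(c:=j))
      else if j = h c \<and> h (Suc c) < j then st (h(c:=j-1)) else st h)"
proof -
  have hc1: "h c \<le> h (c-1)" using vh_anti[OF h, of "c-1" c] by simp
  have hbc: "b c \<le> h c" using vh_ge[OF h] .
  have hsc: "h (Suc c) \<le> h c" using vh_adj[OF h] .
  show ?thesis
  proof (cases "j = Suc (h c) \<and> j \<le> h (c-1)")
    case A: True
    have nin: "(c,j) \<notin> st h" using A by (auto simp: mem_st)
    have eq: "insert (c,j) (st h) = st (h(c:=j))" using A c j by (auto simp: mem_st split: if_splits)
    have "vh (h(c:=j))" using A c hbc hsc by (intro vh_upd[OF h]) auto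
    then show ?thesis using A nin eq st_ideal unfolding toggle_def by auto
  next
    case nA: False
    show ?thesis
    proof (cases "j = h c \<and> h (Suc c) < j")
      case B: True
      have inn: "(c,j) \<in> st h" using B c j by (auto simp: mem_st)
      have eq: "st h - {(c,j)} = st (h(c:=j-1))" using B c j by (auto simp: mem_st split: if_splits)
      have "vh (h(c:=j-1))" using B c j hc1 by (intro vh_upd[OF h]) auto
      then show ?thesis using nA B inn eq st_ideal unfolding toggle_def by auto
    next
      case nB: False
      have r: "toggle PS (c,j) (st h) = st h"
      proof (cases "(c,j) \<in> st h")
        case False
        then have jg: "h c < j" using c j by (auto simp: mem_st)
        have "\<not> is_order_ideal PS (insert (c,j) (st h))"
        proof (cases "j = Suc (h c)")
          case True
          then have jU: "h (c-1) < j" using nA by auto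
          then have "c \<noteq> 1" using h j unfolding vh_def by auto
          then have c2: "2 \<le> c" using c by auto
          have "(c-1, j) \<in> PS" using vh_ge[OF h, of "c-1"] jU j c c2 bmono[of "c-1"] unfolding PS_def by auto
          moreover have "(c-1, j) \<notin> insert (c,j) (st h)" using jU c2 by (auto simp: mem_st)
          ultimately show ?thesis
            by (intro not_ideal_witness[of "(c,j)" _ "(c-1,j)"]) (auto simp: cw_le_def)
        next
          case False
          then have "Suc (h c) < j" using jg by auto
          then have "(c, Suc (h c)) \<in> PS" using c j hbc unfolding PS_def by auto
          moreover have "(c, Suc (h c)) \<notin> insert (c,j) (st h)" using \<open>Suc (h c) < j\<close> by (auto simp: mem_st)
          ultimately show ?thesis using \<open>Suc (h c) < j\<close>
            by (intro not_ideal_witness[of "(c,j)" _ "(c, Suc (h c))"]) (auto simp: cw_le_def)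
        qed
        then show ?thesis using False unfolding toggle_def by auto
      next
        case True
        then have jle: "j \<le> h c" by (auto simp: mem_st)
        have "\<not> is_order_ideal PS (st h - {(c,j)})"
        proof (cases "j = h c")
          case True
          then have jL: "j \<le> h (Suc c)" using nB by auto
          then have "c \<noteq> a" using h j unfolding vh_def by auto
          then have ca: "c < a" using c by auto
          have "(Suc c, j) \<in> st h - {(c,j)}" using jL ca j bmono[of c] c by (auto simp: mem_st)
          moreover have "(c,j) \<in> PS" using c j unfolding PS_def by auto
          ultimately show ?thesis
            by (intro not_ideal_witness[of "(Suc c, j)" _ "(c,j)"]) (auto simp: cw_le_def)
        next
          case False
          then have "j < h c" using jle by auto
          then have "(c, h c) \<in> st h - {(c,j)}" using c j by (auto simp: mem_st)
          moreover have "(c,j) \<in> PS" using c j unfolding PS_def by auto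
          ultimately show ?thesis using \<open>j < h c\<close>
            by (intro not_ideal_witness[of "(c, h c)" _ "(c,j)"]) (auto simp: cw_le_def)
        qed
        then show ?thesis using True unfolding toggle_def by auto
      qed
      then show ?thesis using nA nB by auto
    qed
  qed
qed

definition FF :: "nat \<Rightarrow> nat \<Rightarrow> nat \<Rightarrow> nat \<Rightarrow> nat \<Rightarrow> nat" where
  "FF v U L B j = (if v < U then (if j \<le> Suc v then Suc v else v)
                   else (if j \<le> v then max (max L B) (j - 1) else v))"

lemma FF_step:
  assumes "v \<le> U" "B \<le> v" "L \<le> v" "B < j"
  shows "FF v U L B j = (if j = Suc (FF v U L B (Suc j)) \<and> j \<le> U then j
     else if j = FF v U L B (Suc j) \<and> L < j then j - 1 else FF v U L B (Suc j))"
  using assms unfolding FF_def by (auto simp: max_def)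

lemma FF_bounds:
  assumes "v \<le> U" "B \<le> v" "L \<le> v"
  shows "max L B \<le> FF v U L B j \<and> FF v U L B j \<le> U"
  using assms unfolding FF_def by (auto simp: max_def)

definition tv :: "nat \<Rightarrow> (nat \<Rightarrow> nat) \<Rightarrow> nat" where
  "tv c h = (if h c < h (c-1) then Suc (h c) else max (h (Suc c)) (b c))"

definition tog :: "nat \<Rightarrow> (nat \<Rightarrow> nat) \<Rightarrow> (nat \<Rightarrow> nat)" where
  "tog c h = h(c := tv c h)"

definition cl :: "nat \<Rightarrow> (nat \<times> nat) list" where
  "cl c = map (\<lambda>j. (c,j)) [Suc (b c)..<a+1]"

lemma col_fold:
  assumes h: "vh h" and c: "1 \<le> c" "c \<le> a"
  shows "k \<le> a - b c \<Longrightarrow> foldr (toggle PS) (map (\<lambda>j. (c,j)) [a+1-k..<a+1]) (st h)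
     = st (h(c := FF (h c) (h (c-1)) (h (Suc c)) (b c) (a+1-k)))"
proof (induction k)
  case 0
  have "h c < h (c-1) \<Longrightarrow> h c < a" using vh_le[OF h, of "c-1"] by simp
  then have "FF (h c) (h (c-1)) (h (Suc c)) (b c) (a+1) = h c" unfolding FF_def using vh_le[OF h, of c] by auto
  then show ?case by simp
next
  case (Suc k)
  define j where "j = a - k"
  have bca: "b c \<le> a" using ble c by simp
  have jbc: "b c < j" using Suc.prems unfolding j_def by auto
  have ja: "j \<le> a" unfolding j_def by simp
  have e1: "a + 1 - Suc k = j" unfolding j_def using Suc.prems bca by auto
  have e2: "a + 1 - k = Suc j" unfolding j_def using Suc.prems bca by auto
  have lst: "[a+1 - Suc k..<a+1] = j # [a+1-k..<a+1]" using e1 e2 ja by (simp add: upt_conv_Cons)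
  have hc1: "h c \<le> h (c-1)" using vh_anti[OF h, of "c-1" c] by simp
  have hbc: "b c \<le> h c" using vh_ge[OF h] .
  have hsc: "h (Suc c) \<le> h c" using vh_adj[OF h] .
  define w where "w = FF (h c) (h (c-1)) (h (Suc c)) (b c) (Suc j)"
  have wb: "max (h (Suc c)) (b c) \<le> w \<and> w \<le> h (c-1)"
    unfolding w_def by (rule FF_bounds[OF hc1 hbc hsc])
  have vh1: "vh (h(c := w))" using wb c by (intro vh_upd[OF h]) auto
  have IH: "foldr (toggle PS) (map (\<lambda>j. (c,j)) [a+1-k..<a+1]) (st h) = st (h(c := w))"
    using Suc.IH[OF Suc_leD[OF Suc.prems]] unfolding e2 w_def .
  have cm: "c - 1 \<noteq> c" "Suc c \<noteq> c" using c by auto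
  have "foldr (toggle PS) (map (\<lambda>j. (c,j)) [a+1 - Suc k..<a+1]) (st h) = toggle PS (c,j) (st (h(c := w)))"
    using lst IH by simp
  also have "\<dots> = (if j = Suc w \<and> j \<le> h (c-1) then st (h(c:=j))
      else if j = w \<and> h (Suc c) < j then st (h(c:=j-1)) else st (h(c:=w)))"
    using toggle_st[OF vh1 c jbc ja] cm by simp
  also have "\<dots> = st (h(c := FF (h c) (h (c-1)) (h (Suc c)) (b c) j))"
    using FF_step[OF hc1 hbc hsc jbc] unfolding w_def by auto
  finally show ?case by (simp only: e1)
qed

lemma vh_tog: assumes h: "vh h" and c: "1 \<le> c" "c \<le> a" shows "vh (tog c h)"
proof -
  have hc1: "h c \<le> h (c-1)" using vh_anti[OF h, of "c-1" c] by simp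
  have hbc: "b c \<le> h c" using vh_ge[OF h] .
  have hsc: "h (Suc c) \<le> h c" using vh_adj[OF h] .
  show ?thesis unfolding tog_def tv_def using hc1 hbc hsc c by (intro vh_upd[OF h]) auto
qed

lemma chain_st: assumes h: "vh h" and c: "1 \<le> c" "c \<le> a"
  shows "chain_toggle PS (cl c) (st h) = st (tog c h)"
proof -
  have bca: "b c \<le> a" using ble c by simp
  have e: "a + 1 - (a - b c) = Suc (b c)" using bca by auto
  have hc1: "h c \<le> h (c-1)" using vh_anti[OF h, of "c-1" c] by simp
  have hbc: "b c \<le> h c" using vh_ge[OF h] .
  have hsc: "h (Suc c) \<le> h c" using vh_adj[OF h] .
  have "FF (h c) (h (c-1)) (h (Suc c)) (b c) (Suc (b c)) = tv c h"
    using hc1 hbc hsc unfolding FF_def tv_def by (auto simp: max_def)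
  then show ?thesis using col_fold[OF h c, of "a - b c"] e
    unfolding chain_toggle_def cl_def tog_def by simp
qed

definition Th :: "(nat \<Rightarrow> nat) \<Rightarrow> (nat \<Rightarrow> nat) \<Rightarrow> (nat \<Rightarrow> nat)" where
  "Th \<nu> = fold (\<lambda>k. tog (\<nu> k)) [1..<a+1]"

lemma fold_st:
  "(\<forall>k\<in>set ks. 1 \<le> \<nu> k \<and> \<nu> k \<le> a) \<Longrightarrow> vh h \<Longrightarrow>
   fold (\<lambda>k. chain_toggle PS (cl (\<nu> k))) ks (st h) = st (fold (\<lambda>k. tog (\<nu> k)) ks h)
   \<and> vh (fold (\<lambda>k. tog (\<nu> k)) ks h)"
proof (induction ks arbitrary: h)
  case Nil then show ?case by simp
next
  case (Cons k ks)
  then have k: "1 \<le> \<nu> k" "\<nu> k \<le> a" by auto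
  have "chain_toggle PS (cl (\<nu> k)) (st h) = st (tog (\<nu> k) h)" using chain_st[OF Cons.prems(2) k] .
  moreover have "vh (tog (\<nu> k) h)" using vh_tog[OF Cons.prems(2) k] .
  ultimately show ?case using Cons.IH[of "tog (\<nu> k) h"] Cons.prems(1) by simp
qed

lemma comotion_st:
  assumes "\<forall>k\<in>{1..a}. 1 \<le> \<nu> k \<and> \<nu> k \<le> a" "vh h"
  shows "comotion PS cl a \<nu> (st h) = st (Th \<nu> h) \<and> vh (Th \<nu> h)"
  using fold_st[of "[1..<a+1]" \<nu> h] assms unfolding comotion_def Th_def by auto


definition f :: "nat \<Rightarrow> nat \<Rightarrow> real" where
  "f c v = (\<Sum>j\<in>{b c<..v}. (-1::real) ^ (c + j))"

definition F :: "(nat \<Rightarrow> nat) \<Rightarrow> real" where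
  "F h = (\<Sum>c\<in>{1..a}. f c (h c))"

lemma Rstat_st: "Rstat (st h) = F h"
  unfolding Rstat_def st_def F_def f_def by (rule sum.Sigma[symmetric]) auto

end

lemma sum_shift_periodic:
  fixes \<phi> :: "nat \<Rightarrow> real"
  assumes "\<And>t. \<phi> (t + n) = \<phi> t"
  shows "(\<Sum>t<n. \<phi> (t + s)) = (\<Sum>t<n. \<phi> t)"
proof (induction s)
  case 0 then show ?case by simp
next
  case (Suc s)
  have "(\<Sum>t<Suc n. \<phi> (t + s)) = \<phi> s + (\<Sum>t<n. \<phi> (Suc t + s))"
    using sum.lessThan_Suc_shift[of "\<lambda>t. \<phi> (t + s)" n] by simp
  moreover have "(\<Sum>t<Suc n. \<phi> (t + s)) = (\<Sum>t<n. \<phi> (t + s)) + \<phi> (n + s)" by simp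
  moreover have "\<phi> (n + s) = \<phi> s" using assms[of s] by (simp add: add.commute)
  ultimately have "(\<Sum>t<n. \<phi> (Suc t + s)) = (\<Sum>t<n. \<phi> (t + s))" by simp
  then show ?case using Suc.IH by simp
qed

locale perm = base +
  fixes \<nu> :: "nat \<Rightarrow> nat"
  assumes nu: "\<nu> permutes {1..a}"
begin

definition pos where "pos = inv \<nu>"

lemma nu_in: "1 \<le> k \<Longrightarrow> k \<le> a \<Longrightarrow> 1 \<le> \<nu> k \<and> \<nu> k \<le> a"
  using permutes_in_image[OF nu, of k] by auto

lemma pos_in: "1 \<le> d \<Longrightarrow> d \<le> a \<Longrightarrow> 1 \<le> pos d \<and> pos d \<le> a"
  using permutes_in_image[OF permutes_inv[OF nu], of d] unfolding pos_def by auto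

lemma pos_out: "\<not> (1 \<le> d \<and> d \<le> a) \<Longrightarrow> pos d = d"
  using permutes_not_in[OF permutes_inv[OF nu], of d] unfolding pos_def by auto

lemma nu_pos: "\<nu> (pos d) = d"
  using permutes_inverses(1)[OF nu] unfolding pos_def by simp

lemma pos_nu: "pos (\<nu> k) = k"
  using permutes_inverses(2)[OF nu] unfolding pos_def by simp

definition w :: "nat \<Rightarrow> (nat \<Rightarrow> nat) \<Rightarrow> (nat \<Rightarrow> nat)" where
  "w j = fold (\<lambda>k. tog (\<nu> k)) [1..<j+1]"

lemma w_0: "w 0 h = h" unfolding w_def by simp

lemma w_Suc: "w (Suc j) h = tog (\<nu> (Suc j)) (w j h)"
  unfolding w_def by simp

lemma Th_w: "Th \<nu> h = w a h" unfolding Th_def w_def by simp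

lemma vh_w: "vh h \<Longrightarrow> j \<le> a \<Longrightarrow> vh (w j h)"
proof (induction j)
  case 0 then show ?case by (simp add: w_0)
next
  case (Suc j)
  then show ?case using vh_tog nu_in[of "Suc j"] by (simp add: w_Suc)
qed

lemma vh_Th: "vh h \<Longrightarrow> vh (Th \<nu> h)"
  using vh_w[of h a] by (simp add: Th_w)

lemma w_val: "j \<le> a \<Longrightarrow> w j h d = (if 1 \<le> d \<and> d \<le> a \<and> pos d \<le> j then w (pos d) h d else h d)"
proof (induction j)
  case 0 then show ?case using pos_in[of d] by (auto simp: w_0)
next
  case (Suc j)
  show ?case
  proof (cases "d = \<nu> (Suc j)")
    case True
    then have "pos d = Suc j" using pos_nu by simp
    moreover have "1 \<le> d \<and> d \<le> a" using True nu_in[of "Suc j"] Suc.prems by auto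
    ultimately show ?thesis by simp
  next
    case False
    have "w (Suc j) h d = w j h d" using False by (simp add: w_Suc tog_def)
    moreover have "pos d \<noteq> Suc j" using False nu_pos by metis
    ultimately show ?thesis using Suc by auto
  qed
qed

lemma wN: assumes "vh h" "p \<le> a" shows "w p h d = (if pos d \<le> p then Th \<nu> h d else h d)"
proof (cases "1 \<le> d \<and> d \<le> a")
  case True
  then show ?thesis using w_val[OF assms(2), of h d] w_val[of a h d] pos_in[of d] by (auto simp: Th_w)
next
  case False
  then have pd: "pos d = d" using pos_out by simp
  have "w p h d = h d" using w_val[OF assms(2), of h d] False by auto
  moreover have "d = 0 \<Longrightarrow> Th \<nu> h d = h d" using vh_Th[OF assms(1)] assms(1) unfolding vh_def by simp
  ultimately show ?thesis using pd False assms(2) by (cases "d = 0") auto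
qed

lemma DYN:
  assumes h: "vh h" and c: "1 \<le> c" "c \<le> a"
  shows "Th \<nu> h c = (let N = (\<lambda>d. if pos d < pos c then Th \<nu> h d else h d) in
            if h c < N (c-1) then Suc (h c) else max (N (Suc c)) (b c))"
proof -
  obtain p where p: "pos c = Suc p" using pos_in[OF c] by (cases "pos c") auto
  have pa: "p \<le> a" "Suc p \<le> a" using pos_in[OF c] p by auto
  have "Th \<nu> h c = w (Suc p) h c" using wN[OF h pa(2), of c] p by simp
  also have "\<dots> = tv c (w p h)" using nu_pos[of c] p by (simp add: w_Suc tog_def)
  finally have e: "Th \<nu> h c = tv c (w p h)" .
  have "\<And>d. w p h d = (if pos d < pos c then Th \<nu> h d else h d)"
    using wN[OF h pa(1)] p by auto
  then show ?thesis using e unfolding tv_def Let_def by (simp add: p)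
qed

lemma MIX1:
  assumes h: "vh h" and c: "1 \<le> c" "Suc c \<le> a" and lt: "pos (Suc c) < pos c"
  shows "Th \<nu> h (Suc c) \<le> h c"
proof -
  define p where "p = pos (Suc c)"
  have pa: "p \<le> a" using pos_in[of "Suc c"] c unfolding p_def by auto
  have "w p h (Suc c) \<le> w p h c" using vh_adj[OF vh_w[OF h pa]] .
  then show ?thesis using wN[OF h pa] lt unfolding p_def by auto
qed

lemma MIX2:
  assumes h: "vh h" and c: "1 \<le> c" "Suc c \<le> a" and lt: "pos c < pos (Suc c)"
  shows "h (Suc c) \<le> Th \<nu> h c"
proof -
  define p where "p = pos c"
  have pa: "p \<le> a" using pos_in[of c] c unfolding p_def by auto
  have "w p h (Suc c) \<le> w p h c" using vh_adj[OF vh_w[OF h pa]] .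
  then show ?thesis using wN[OF h pa] lt unfolding p_def by auto
qed

lemma pos_neq: "1 \<le> c \<Longrightarrow> c \<le> a \<Longrightarrow> 1 \<le> d \<Longrightarrow> d \<le> a \<Longrightarrow> c \<noteq> d \<Longrightarrow> pos c \<noteq> pos d"
  using nu_pos by metis

definition s :: "nat \<Rightarrow> nat" where
  "s c = card {d \<in> {1..<c}. pos (Suc d) < pos d}"

lemma s_Suc: "1 \<le> c \<Longrightarrow> s (Suc c) = s c + (if pos (Suc c) < pos c then 1 else 0)"
proof -
  assume c: "1 \<le> c"
  have "{d \<in> {1..<Suc c}. pos (Suc d) < pos d} =
        (if pos (Suc c) < pos c then insert c {d \<in> {1..<c}. pos (Suc d) < pos d}
         else {d \<in> {1..<c}. pos (Suc d) < pos d})" using c by (auto simp: less_Suc_eq)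
  then show ?thesis unfolding s_def by auto
qed

abbreviation hs where "hs h t \<equiv> (Th \<nu> ^^ t) h"

lemma vh_hs: "vh h \<Longrightarrow> vh (hs h t)"
  by (induction t) (auto intro: vh_Th)

definition G :: "(nat \<Rightarrow> nat) \<Rightarrow> (nat \<Rightarrow> nat)" where
  "G h c = (if 1 \<le> c \<and> c \<le> a then hs h (s c) c else h c)"

lemma hs_Suc: "hs (Th \<nu> h) t = hs h (Suc t)"
  by (simp add: funpow_Suc_right del: funpow.simps)

lemma G_rel:
  assumes h: "vh h"
  defines "g \<equiv> G h" and "g' \<equiv> G (Th \<nu> h)"
  shows "vh g \<and> vh g' \<and> (\<forall>c. 1 \<le> c \<and> c \<le> a \<longrightarrow> g c \<le> g' (c - 1))
     \<and> (\<forall>c. 1 \<le> c \<and> c \<le> a \<longrightarrow> g' c = (if g c < g' (c-1) then Suc (g c) else max (g (Suc c)) (b c)))"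
proof -
  have vhs: "\<And>t. vh (hs h t)" using vh_hs[OF h] .
  have gc: "\<And>c. 1 \<le> c \<Longrightarrow> c \<le> a \<Longrightarrow> g c = hs h (s c) c" unfolding g_def G_def by simp
  have g'c: "\<And>c. 1 \<le> c \<Longrightarrow> c \<le> a \<Longrightarrow> g' c = hs h (Suc (s c)) c"
    unfolding g'_def G_def by (simp add: hs_Suc del: funpow.simps)
  have hsS: "\<And>t. hs h (Suc t) = Th \<nu> (hs h t)" by simp
  have g0: "g 0 = a" "g' 0 = a" using h vh_Th[OF h] unfolding g_def g'_def G_def vh_def by auto
  have gbig: "\<And>c. a < c \<Longrightarrow> g c = 0 \<and> g' c = 0"
    using h vh_Th[OF h] unfolding g_def g'_def G_def vh_def by auto
  have mono: "\<And>t c. 1 \<le> c \<Longrightarrow> Suc c \<le> a \<Longrightarrow> hs h (s (Suc c) + t) (Suc c) \<le> hs h (s c + t) c"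
  proof -
    fix t c assume c: "1 \<le> c" "Suc c \<le> a"
    show "hs h (s (Suc c) + t) (Suc c) \<le> hs h (s c + t) c"
    proof (cases "pos (Suc c) < pos c")
      case True
      then have "s (Suc c) + t = Suc (s c + t)" using s_Suc[OF c(1)] by simp
      then show ?thesis using MIX1[OF vhs c True] hsS by simp
    next
      case False
      then have "s (Suc c) + t = s c + t" using s_Suc[OF c(1)] by simp
      then show ?thesis using vh_adj[OF vhs] by simp
    qed
  qed
  have vg: "vh g"
    unfolding vh_def
  proof (intro conjI allI impI)
    show "g 0 = a" by (rule g0(1))
  next
    fix c assume "a < c" then show "g c = 0" using gbig by simp
  next
    fix c assume c: "1 \<le> c \<and> c \<le> a"
    show "b c \<le> g c" "g c \<le> a" using gc[of c] c vh_ge[OF vhs] vh_le[OF vhs] by auto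
  next
    fix c assume c: "1 \<le> c \<and> c < a"
    show "g (Suc c) \<le> g c" using gc[of c] gc[of "Suc c"] c mono[of c 0] by auto
  qed
  have vg': "vh g'"
    unfolding vh_def
  proof (intro conjI allI impI)
    show "g' 0 = a" by (rule g0(2))
  next
    fix c assume "a < c" then show "g' c = 0" using gbig by simp
  next
    fix c assume c: "1 \<le> c \<and> c \<le> a"
    show "b c \<le> g' c" "g' c \<le> a" using g'c[of c] c vh_ge[OF vhs, of c "Suc (s c)"] vh_le[OF vhs, of "Suc (s c)" c] by auto
  next
    fix c assume c: "1 \<le> c \<and> c < a"
    show "g' (Suc c) \<le> g' c" using g'c[of c] g'c[of "Suc c"] c mono[of c 1] by auto
  qed
  have R2: "\<forall>c. 1 \<le> c \<and> c \<le> a \<longrightarrow> g c \<le> g' (c - 1)"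
  proof (intro allI impI)
    fix c assume c: "1 \<le> c \<and> c \<le> a"
    show "g c \<le> g' (c - 1)"
    proof (cases "c = 1")
      case True then show ?thesis using g0 vh_le[OF vg] by simp
    next
      case False
      define d where "d = c - 1"
      have d: "1 \<le> d" "Suc d \<le> a" "c = Suc d" using c False unfolding d_def by auto
      have ne: "pos d \<noteq> pos (Suc d)" using pos_neq[of d "Suc d"] d by auto
      show ?thesis
      proof (cases "pos (Suc d) < pos d")
        case True
        then have "s (Suc d) = Suc (s d)" using s_Suc[OF d(1)] by simp
        then show ?thesis using gc[of c] g'c[of d] d c vh_adj[OF vhs, of "Suc (s d)" d] by simp
      next
        case False
        then have lt: "pos d < pos (Suc d)" using ne by auto
        then have "s (Suc d) = s d" using s_Suc[OF d(1)] by simp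
        then show ?thesis using gc[of c] g'c[of d] d c MIX2[OF vhs d(1,2) lt] hsS by simp
      qed
    qed
  qed
  have R3: "\<forall>c. 1 \<le> c \<and> c \<le> a \<longrightarrow> g' c = (if g c < g' (c-1) then Suc (g c) else max (g (Suc c)) (b c))"
  proof (intro allI impI)
    fix c assume c: "1 \<le> c \<and> c \<le> a"
    define t where "t = s c"
    define N where "N = (\<lambda>d. if pos d < pos c then Th \<nu> (hs h t) d else hs h t d)"
    have dyn: "g' c = (if hs h t c < N (c-1) then Suc (hs h t c) else max (N (Suc c)) (b c))"
      using DYN[OF vhs, of c t] c g'c[of c] hsS unfolding N_def t_def Let_def by simp
    have N1: "N (c - 1) = g' (c - 1)"
    proof (cases "c = 1")
      case True
      then have "pos (c-1) < pos c" using pos_out[of 0] pos_in[of c] c by simp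
      then show ?thesis using True g0 vh_Th[OF vhs] unfolding N_def vh_def by simp
    next
      case False
      define d where "d = c - 1"
      have d: "1 \<le> d" "Suc d \<le> a" "c = Suc d" using c False unfolding d_def by auto
      have ne: "pos d \<noteq> pos (Suc d)" using pos_neq[of d "Suc d"] d by auto
      show ?thesis
      proof (cases "pos (Suc d) < pos d")
        case True
        then have "s (Suc d) = Suc (s d)" using s_Suc[OF d(1)] by simp
        then show ?thesis using True g'c[of d] d unfolding N_def t_def by simp
      next
        case False
        then have "s (Suc d) = s d" using s_Suc[OF d(1)] by simp
        then show ?thesis using False ne g'c[of d] d hsS unfolding N_def t_def by simp
      qed
    qed
    have N2: "N (Suc c) = g (Suc c)"
    proof (cases "c = a")
      case True
      then have "pos (Suc c) = Suc c" using pos_out by simp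
      moreover have "pos c \<le> a" using pos_in c by auto
      ultimately show ?thesis using True gbig[of "Suc c"] vhs unfolding N_def vh_def by auto
    next
      case False
      then have cs: "Suc c \<le> a" using c by auto
      show ?thesis
      proof (cases "pos (Suc c) < pos c")
        case True
        then have "s (Suc c) = Suc (s c)" using s_Suc c by simp
        then show ?thesis using True gc[of "Suc c"] cs hsS unfolding N_def t_def by simp
      next
        case False
        then have "s (Suc c) = s c" using s_Suc c by simp
        then show ?thesis using False gc[of "Suc c"] cs unfolding N_def t_def by simp
      qed
    qed
    show "g' c = (if g c < g' (c-1) then Suc (g c) else max (g (Suc c)) (b c))"
      using dyn N1 N2 gc[of c] c unfolding t_def by simp
  qed
  show ?thesis using vg vg' R2 R3 by blast
qed


lemma orbit_sum:
  assumes h: "vh h" and n: "0 < n" and per: "hs h n = h"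
    and K: "\<And>g g'. vh g \<Longrightarrow> vh g' \<Longrightarrow> (\<forall>c. 1 \<le> c \<and> c \<le> a \<longrightarrow> g c \<le> g' (c - 1)) \<Longrightarrow>
      (\<forall>c. 1 \<le> c \<and> c \<le> a \<longrightarrow> g' c = (if g c < g' (c-1) then Suc (g c) else max (g (Suc c)) (b c)))
      \<Longrightarrow> F g + F g' = K"
  shows "2 * (\<Sum>t<n. F (hs h t)) = real n * K"
proof -
  have perh: "\<And>t. hs h (t + n) = hs h t"
    using per by (simp add: funpow_add)
  have Gc: "\<And>t c. 1 \<le> c \<Longrightarrow> c \<le> a \<Longrightarrow> G (hs h t) c = hs h (t + s c) c"
  proof -
    fix t c assume "1 \<le> c" "c \<le> a"
    moreover have "(Th \<nu> ^^ s c) (hs h t) = hs h (t + s c)"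
      by (metis add.commute comp_apply funpow_add)
    ultimately show "G (hs h t) c = hs h (t + s c) c" unfolding G_def by simp
  qed
  have FG: "\<And>t. F (G (hs h t)) = (\<Sum>c\<in>{1..a}. f c (hs h (t + s c) c))"
    unfolding F_def using Gc by (intro sum.cong) auto
  have A: "(\<Sum>t<n. F (G (hs h t))) = (\<Sum>t<n. F (hs h t))"
  proof -
    have "(\<Sum>t<n. F (G (hs h t))) = (\<Sum>t<n. \<Sum>c\<in>{1..a}. f c (hs h (t + s c) c))"
      using FG by simp
    also have "\<dots> = (\<Sum>c\<in>{1..a}. \<Sum>t<n. f c (hs h (t + s c) c))" by (rule sum.swap)
    also have "\<dots> = (\<Sum>c\<in>{1..a}. \<Sum>t<n. f c (hs h t c))"
    proof (rule sum.cong[OF refl])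
      fix c assume "c \<in> {1..a}"
      show "(\<Sum>t<n. f c (hs h (t + s c) c)) = (\<Sum>t<n. f c (hs h t c))"
        using sum_shift_periodic[of "\<lambda>t. f c (hs h t c)" n "s c"] perh by simp
    qed
    also have "\<dots> = (\<Sum>t<n. F (hs h t))" unfolding F_def by (rule sum.swap)
    finally show ?thesis .
  qed
  have B: "\<And>t. F (G (hs h t)) + F (G (hs h (Suc t))) = K"
  proof -
    fix t
    have "hs h (Suc t) = Th \<nu> (hs h t)" by simp
    then show "F (G (hs h t)) + F (G (hs h (Suc t))) = K"
      using G_rel[OF vh_hs[OF h, of t]] K by metis
  qed
  have C: "(\<Sum>t<n. F (G (hs h (Suc t)))) = (\<Sum>t<n. F (G (hs h t)))"
    using sum_shift_periodic[of "\<lambda>t. F (G (hs h t))" n 1] perh by simp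
  have "(\<Sum>t<n. F (G (hs h t)) + F (G (hs h (Suc t)))) = real n * K" using B by simp
  then have "(\<Sum>t<n. F (G (hs h t))) + (\<Sum>t<n. F (G (hs h (Suc t)))) = real n * K"
    by (simp add: sum.distrib)
  then show ?thesis using A C by simp
qed

end


lemma alt_sum: "(\<Sum>c\<in>{1..n}. (-1::real) ^ (c + 1)) = (if odd n then 1 else 0)"
  by (induction n) (auto simp: sum.cl_ivl_Suc)

lemma alt_tele: "(\<Sum>c\<in>{1..n}. (-1::real) ^ (c + 1) * (\<phi> c + \<phi> (Suc c))) = \<phi> 1 + (-1) ^ (n + 1) * \<phi> (Suc n)"
  by (induction n) (auto simp: sum.cl_ivl_Suc algebra_simps)

lemma tele: fixes \<psi> :: "nat \<Rightarrow> real" shows "(\<Sum>c\<in>{1..n}. \<psi> c - \<psi> (c - 1)) = \<psi> n - \<psi> 0"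
  by (induction n) (auto simp: sum.cl_ivl_Suc)

context base
begin

lemma f_closed: "f c (b c + x) = (if odd x then (-1) ^ (c + b c + 1) else 0)"
proof (induction x)
  case 0 then show ?case by (simp add: f_def)
next
  case (Suc x)
  have "{b c<..b c + Suc x} = insert (b c + Suc x) {b c<..b c + x}" by auto
  then have "f c (b c + Suc x) = (-1) ^ (c + (b c + Suc x)) + f c (b c + x)"
    unfolding f_def by simp
  then show ?case using Suc.IH by (auto simp: power_add)
qed

lemma K_Q:
  assumes bQ: "\<And>c. 1 \<le> c \<Longrightarrow> c \<le> a \<Longrightarrow> b c = 0"
    and vg: "vh g" and vg': "vh g'"
    and R2: "\<forall>c. 1 \<le> c \<and> c \<le> a \<longrightarrow> g c \<le> g' (c - 1)"
    and R3: "\<forall>c. 1 \<le> c \<and> c \<le> a \<longrightarrow> g' c = (if g c < g' (c-1) then Suc (g c) else max (g (Suc c)) (b c))"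
  shows "F g + F g' = (if odd a then 1 else 0)"
proof -
  have fc: "\<And>c v. 1 \<le> c \<Longrightarrow> c \<le> a \<Longrightarrow> f c v = (-1) ^ (c + 1) * (if odd v then 1 else 0)"
  proof -
    fix c v assume c: "1 \<le> c" "c \<le> a"
    have "f c v = f c (b c + v)" using bQ[OF c] by simp
    then show "f c v = (-1) ^ (c + 1) * (if odd v then 1 else 0)"
      using f_closed[of c v] bQ[OF c] by simp
  qed
  have g'0: "g' 0 = a" using vg' unfolding vh_def by simp
  have g1: "a \<ge> 1 \<Longrightarrow> g 1 \<le> a" using vh_le[OF vg] by simp
  show ?thesis
  proof (cases "a \<ge> 1 \<and> g 1 < a")
    case True
    have inc: "\<And>c. 1 \<le> c \<Longrightarrow> c \<le> a \<Longrightarrow> g' c = Suc (g c)"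
    proof -
      fix c show "1 \<le> c \<Longrightarrow> c \<le> a \<Longrightarrow> g' c = Suc (g c)"
      proof (induction c)
        case 0 then show ?case by simp
      next
        case (Suc c)
        show ?case
        proof (cases "c = 0")
          case True then show ?thesis using R3 \<open>a \<ge> 1 \<and> g 1 < a\<close> g'0 by auto
        next
          case False
          then have "g' c = Suc (g c)" using Suc by simp
          moreover have "g (Suc c) \<le> g c" using vh_adj[OF vg] .
          ultimately show ?thesis using R3 Suc.prems by auto
        qed
      qed
    qed
    have "F g + F g' = (\<Sum>c\<in>{1..a}. f c (g c) + f c (g' c))" unfolding F_def by (simp add: sum.distrib)
    also have "\<dots> = (\<Sum>c\<in>{1..a}. (-1::real) ^ (c + 1))"
      by (rule sum.cong) (auto simp: fc inc)
    finally show ?thesis using alt_sum by simp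
  next
    case False
    show ?thesis
    proof (cases "a = 0")
      case True then show ?thesis unfolding F_def by simp
    next
      case a0: False
      then have ga: "g 1 = a" using False g1 by auto
      have dr: "\<And>c. 1 \<le> c \<Longrightarrow> c \<le> a \<Longrightarrow> g' c = g (Suc c)"
      proof -
        fix c show "1 \<le> c \<Longrightarrow> c \<le> a \<Longrightarrow> g' c = g (Suc c)"
        proof (induction c)
          case 0 then show ?case by simp
        next
          case (Suc c)
          show ?case
          proof (cases "c = 0")
            case True then show ?thesis using R3 ga g'0 bQ[of 1] a0 by auto
          next
            case False
            then have "g' c = g (Suc c)" using Suc by simp
            then show ?thesis using R3 Suc.prems bQ[of "Suc c"] by auto
          qed
        qed
      qed
      define \<phi> where "\<phi> c = (if odd (g c) then 1 else 0 :: real)" for c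
      have "F g + F g' = (\<Sum>c\<in>{1..a}. f c (g c) + f c (g' c))" unfolding F_def by (simp add: sum.distrib)
      also have "\<dots> = (\<Sum>c\<in>{1..a}. (-1::real) ^ (c + 1) * (\<phi> c + \<phi> (Suc c)))"
        by (rule sum.cong) (auto simp: fc dr \<phi>_def algebra_simps)
      also have "\<dots> = \<phi> 1 + (-1) ^ (a + 1) * \<phi> (Suc a)" by (rule alt_tele)
      also have "\<dots> = (if odd a then 1 else 0)"
        using ga vg unfolding \<phi>_def vh_def by auto
      finally show ?thesis .
    qed
  qed
qed

lemma K_U:
  assumes bU: "\<And>c. c \<le> a \<Longrightarrow> b c = a - c"
    and vg: "vh g" and vg': "vh g'"
    and R2: "\<forall>c. 1 \<le> c \<and> c \<le> a \<longrightarrow> g c \<le> g' (c - 1)"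
    and R3: "\<forall>c. 1 \<le> c \<and> c \<le> a \<longrightarrow> g' c = (if g c < g' (c-1) then Suc (g c) else max (g (Suc c)) (b c))"
  shows "F g + F g' = (-1) ^ (a + 1) * real a"
proof -
  define e :: real where "e = (-1) ^ (a + 1)"
  define q where "q x = (if odd x then 1 else 0 :: real)" for x :: nat
  define X where "X c = g c + c - a" for c
  define Y where "Y c = g' c + c - a" for c
  have fc: "\<And>c v. 1 \<le> c \<Longrightarrow> c \<le> a \<Longrightarrow> a - c \<le> v \<Longrightarrow> f c v = e * q (v + c - a)"
  proof -
    fix c v assume c: "1 \<le> c" "c \<le> a" "a - c \<le> v"
    have "v = b c + (v + c - a)" using c bU[of c] by auto
    then have "f c v = f c (b c + (v + c - a))" by simp
    also have "\<dots> = (if odd (v + c - a) then (-1) ^ (c + b c + 1) else 0)" by (rule f_closed)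
    also have "c + b c + 1 = a + 1" using c bU[of c] by auto
    finally show "f c v = e * q (v + c - a)" unfolding e_def q_def by simp
  qed
  have gb: "\<And>c. a - c \<le> g c" "\<And>c. a - c \<le> g' c"
    using vh_ge[OF vg] vh_ge[OF vg'] bU bbig by (metis diff_is_0_eq le_cases zero_le)+
  have g'0: "g' 0 = a" using vg' unfolding vh_def by simp
  have Y0: "Y 0 = 0" unfolding Y_def using g'0 by simp
  define drop where "drop c = (1 \<le> c \<and> c \<le> a \<and> \<not> g c < g' (c - 1))" for c
  define dr where "dr c = (if drop c then 1 else 0 :: real)" for c
  define \<psi> where "\<psi> c = dr (Suc c) * q (Y c)" for c
  have percol: "\<And>c. 1 \<le> c \<Longrightarrow> c \<le> a \<Longrightarrow> q (X c) + q (Y c) = 1 + dr c * (q (Y c) - q (Y (c - 1)))"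
  proof -
    fix c assume c: "1 \<le> c" "c \<le> a"
    show "q (X c) + q (Y c) = 1 + dr c * (q (Y c) - q (Y (c - 1)))"
    proof (cases "g c < g' (c - 1)")
      case True
      then have "g' c = Suc (g c)" using R3 c by auto
      then have "Y c = Suc (X c)" unfolding X_def Y_def using gb(1)[of c] by auto
      then show ?thesis using True unfolding dr_def drop_def q_def by auto
    next
      case False
      then have "g c = g' (c - 1)" using R2 c by force
      then have "X c = Suc (Y (c - 1))" unfolding X_def Y_def using gb(2)[of "c-1"] c by auto
      then show ?thesis using False c unfolding dr_def drop_def q_def by auto
    qed
  qed
  have key: "\<And>c. 1 \<le> c \<Longrightarrow> c \<le> a \<Longrightarrow> dr c * q (Y c) = \<psi> c"
  proof -
    fix c assume c: "1 \<le> c" "c \<le> a"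
    show "dr c * q (Y c) = \<psi> c"
    proof (cases "drop c")
      case False
      have "\<not> drop (Suc c)"
      proof
        assume ds: "drop (Suc c)"
        have "g' c = Suc (g c)" using R3 c False unfolding drop_def by auto
        moreover have "g (Suc c) \<le> g c" using vh_adj[OF vg] .
        ultimately show False using ds unfolding drop_def by auto
      qed
      then show ?thesis using False unfolding \<psi>_def dr_def by simp
    next
      case True
      show ?thesis
      proof (cases "drop (Suc c)")
        case True then show ?thesis using \<open>drop c\<close> unfolding \<psi>_def dr_def by simp
      next
        case nd: False
        have gc: "g' c = max (g (Suc c)) (b c)" using R3 c True unfolding drop_def by auto
        have "Y c = 0"
        proof (cases "c = a")
          case True
          then have "g (Suc c) = 0" using vg unfolding vh_def by auto
          then show ?thesis using gc True bU[of a] unfolding Y_def by simp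
        next
          case False
          then have "g (Suc c) < g' c" using nd c unfolding drop_def by auto
          then have "g' c = a - c" using gc bU[of c] c by auto
          then show ?thesis unfolding Y_def using c by simp
        qed
        then show ?thesis unfolding \<psi>_def q_def dr_def by simp
      qed
    qed
  qed
  have key2: "\<And>c. 1 \<le> c \<Longrightarrow> dr c * q (Y (c - 1)) = \<psi> (c - 1)"
    unfolding \<psi>_def by simp
  have "F g + F g' = (\<Sum>c\<in>{1..a}. f c (g c) + f c (g' c))" unfolding F_def by (simp add: sum.distrib)
  also have "\<dots> = (\<Sum>c\<in>{1..a}. e * (q (X c) + q (Y c)))"
    by (rule sum.cong) (auto simp: fc gb X_def Y_def algebra_simps)
  also have "\<dots> = (\<Sum>c\<in>{1..a}. e * (1 + (\<psi> c - \<psi> (c - 1))))"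
  proof (rule sum.cong[OF refl])
    fix c assume c: "c \<in> {1..a}"
    then have k1: "dr c * q (Y (c - 1)) = \<psi> (c - 1)" using key2 by simp
    have k2: "dr c * q (Y c) = \<psi> c" using key c by simp
    have eq: "q (X c) + q (Y c) = 1 + (\<psi> c - \<psi> (c - 1))"
      using percol[of c] c k1 k2 by (simp add: algebra_simps)
    show "e * (q (X c) + q (Y c)) = e * (1 + (\<psi> c - \<psi> (c - 1)))"
      using eq by simp
  qed
  also have "\<dots> = e * (real a + (\<psi> a - \<psi> 0))"
    using tele[of \<psi> a] by (simp add: sum_distrib_left[symmetric] sum.distrib)
  also have "\<psi> a = 0" unfolding \<psi>_def dr_def drop_def by simp
  also have "\<psi> 0 = 0" unfolding \<psi>_def q_def using Y0 by simp
  finally show ?thesis unfolding e_def by simp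
qed

end


lemma funpow_mod:
  assumes "(f ^^ n) x = x" shows "(f ^^ m) x = (f ^^ (m mod n)) x"
proof -
  have q: "(f ^^ (n * q)) x = x" for q
  proof (induction q)
    case 0 then show ?case by simp
  next
    case (Suc q)
    have "(f ^^ (n * Suc q)) x = (f ^^ (n * q)) ((f ^^ n) x)"
      by (metis add.commute comp_apply funpow_add mult_Suc_right)
    then show ?case using Suc assms by simp
  qed
  have "(f ^^ m) x = (f ^^ (m mod n)) ((f ^^ (n * (m div n))) x)"
    by (metis comp_apply funpow_add mod_div_mult_eq mult.commute)
  then show ?thesis using q by simp
qed

lemma homomesic_intro:
  assumes fin: "finite S" and bij: "bij_betw T S S"
    and H: "\<And>x n. x \<in> S \<Longrightarrow> 0 < n \<Longrightarrow> (T ^^ n) x = x \<Longrightarrow> (\<Sum>t<n. \<phi> ((T ^^ t) x)) = real n * c"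
  shows "homomesic S T \<phi>"
  unfolding homomesic_def
proof (intro conjI exI ballI)
  show "finite S" "bij_betw T S S" using fin bij by auto
next
  fix x assume x: "x \<in> S"
  have sub: "T ` S \<subseteq> S" and inj: "inj_on T S" using bij by (auto simp: bij_betw_def)
  define n where "n = (LEAST n. 0 < n \<and> (T ^^ n) x = x)"
  have ex: "\<exists>n>0. (T ^^ n) x = x" using period_exists[OF fin bij x] .
  have n: "0 < n" "(T ^^ n) x = x" using LeastI_ex[OF ex] unfolding n_def by auto
  have nmin: "\<And>m. 0 < m \<Longrightarrow> (T ^^ m) x = x \<Longrightarrow> n \<le> m" unfolding n_def by (simp add: Least_le)
  have orb: "orbit_of T x = (\<lambda>t. (T ^^ t) x) ` {..<n}"
  proof
    show "orbit_of T x \<subseteq> (\<lambda>t. (T ^^ t) x) ` {..<n}"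
    proof
      fix y assume "y \<in> orbit_of T x"
      then obtain m where "y = (T ^^ m) x" unfolding orbit_of_def by auto
      then have "y = (T ^^ (m mod n)) x" using funpow_mod[OF n(2)] by simp
      then show "y \<in> (\<lambda>t. (T ^^ t) x) ` {..<n}" using n(1) by auto
    qed
  next
    show "(\<lambda>t. (T ^^ t) x) ` {..<n} \<subseteq> orbit_of T x" unfolding orbit_of_def by auto
  qed
  have injn: "inj_on (\<lambda>t. (T ^^ t) x) {..<n}"
  proof (rule inj_onI)
    fix i j assume ij: "i \<in> {..<n}" "j \<in> {..<n}" "(T ^^ i) x = (T ^^ j) x"
    show "i = j"
    proof (rule ccontr)
      assume "i \<noteq> j"
      then consider "i < j" | "j < i" by linarith
      then show False
      proof cases
        case 1
        then have "x = (T ^^ (j - i)) x" using funpow_cancel[OF sub inj x, of i "j - i"] ij by simp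
        then show False using nmin[of "j - i"] 1 ij by auto
      next
        case 2
        then have "x = (T ^^ (i - j)) x" using funpow_cancel[OF sub inj x, of j "i - j"] ij by simp
        then show False using nmin[of "i - j"] 2 ij by auto
      qed
    qed
  qed
  have "(\<Sum>y\<in>orbit_of T x. \<phi> y) = (\<Sum>t<n. \<phi> ((T ^^ t) x))"
    unfolding orb by (subst sum.reindex[OF injn]) simp
  also have "\<dots> = real n * c" using H[OF x n] .
  finally have "(\<Sum>y\<in>orbit_of T x. \<phi> y) = real n * c" .
  moreover have "card (orbit_of T x) = n" unfolding orb using card_image[OF injn] by simp
  ultimately show "(\<Sum>y\<in>orbit_of T x. \<phi> y) / real (card (orbit_of T x)) = c" using n(1) by simp
qed

context perm
begin

lemma finite_PS: "finite PS"
  by (rule finite_subset[of _ "{1..a} \<times> {..a}"]) (auto simp: PS_def)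

lemma comotion_pow:
  assumes "vh h" shows "(comotion PS cl a \<nu> ^^ t) (st h) = st (hs h t)"
proof (induction t)
  case 0 then show ?case by simp
next
  case (Suc t)
  have nk: "\<forall>k\<in>{1..a}. 1 \<le> \<nu> k \<and> \<nu> k \<le> a" using nu_in by auto
  show ?case using Suc comotion_st[OF nk vh_hs[OF assms, of t]] by simp
qed

lemma homo:
  assumes K: "\<And>g g'. vh g \<Longrightarrow> vh g' \<Longrightarrow> (\<forall>c. 1 \<le> c \<and> c \<le> a \<longrightarrow> g c \<le> g' (c - 1)) \<Longrightarrow>
      (\<forall>c. 1 \<le> c \<and> c \<le> a \<longrightarrow> g' c = (if g c < g' (c-1) then Suc (g c) else max (g (Suc c)) (b c)))
      \<Longrightarrow> F g + F g' = K"
  shows "homomesic (ideals PS) (comotion PS cl a \<nu>) Rstat"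
proof -
  have fb: "finite (ideals PS) \<and> bij_betw (comotion PS cl a \<nu>) (ideals PS) (ideals PS)"
    by (rule comotion_bij[OF finite_PS])
  show ?thesis
  proof (rule homomesic_intro[where c = "K / 2"])
    show "finite (ideals PS)" "bij_betw (comotion PS cl a \<nu>) (ideals PS) (ideals PS)" using fb by auto
  next
    fix x n assume x: "x \<in> ideals PS" and n: "0 < n" and per: "(comotion PS cl a \<nu> ^^ n) x = x"
    obtain h where h: "vh h" "x = st h" using x ideals_eq by auto
    have "st (hs h n) = st h" using per comotion_pow[OF h(1), of n] h(2) by simp
    then have hn: "hs h n = h" using st_inj[OF vh_hs[OF h(1)] h(1)] by simp
    have "(\<Sum>t<n. Rstat ((comotion PS cl a \<nu> ^^ t) x)) = (\<Sum>t<n. F (hs h t))"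
      using comotion_pow[OF h(1)] h(2) Rstat_st by simp
    also have "\<dots> = real n * (K / 2)" using orbit_sum[OF h(1) n hn K] by simp
    finally show "(\<Sum>t<n. Rstat ((comotion PS cl a \<nu> ^^ t) x)) = real n * (K / 2)" .
  qed
qed

end

lemma comotion_cong:
  assumes "\<And>k. k \<in> {1..a} \<Longrightarrow> col (\<nu> k) = col' (\<nu> k)"
  shows "comotion P col a \<nu> = comotion P col' a \<nu>"
  unfolding comotion_def
proof (rule ext)
  fix I show "fold (\<lambda>k. chain_toggle P (col (\<nu> k))) [1..<a + 1] I = fold (\<lambda>k. chain_toggle P (col' (\<nu> k))) [1..<a + 1] I"
    using assms by (intro fold_cong) auto
qed

theorem mainTheorem12:
  fixes a :: nat and \<nu> :: "nat \<Rightarrow> nat" and P :: "(nat \<times> nat) set"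
    and col :: "nat \<Rightarrow> (nat \<times> nat) list"
  assumes "a \<ge> 1"
    and "\<nu> permutes {1..a}"
    and "(P = Qaa a \<and> col = colQ a) \<or> (P = Ua a \<and> col = colU a)"
  shows "homomesic (ideals P) (comotion P col a \<nu>) Rstat"
  using assms(3)
proof
  assume A: "P = Qaa a \<and> col = colQ a"
  interpret Q: perm a "\<lambda>c. if c = 0 then a else 0" \<nu>
    by unfold_locales (use assms(2) in auto)
  have PE: "P = Q.PS" using A unfolding Q.PS_def Qaa_def by auto
  have CE: "comotion P col a \<nu> = comotion P Q.cl a \<nu>"
  proof (rule comotion_cong)
    fix k assume "k \<in> {1..a}"
    then have "1 \<le> \<nu> k" using Q.nu_in by auto
    then show "col (\<nu> k) = Q.cl (\<nu> k)" using A unfolding colQ_def Q.cl_def by simp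
  qed
  have "homomesic (ideals Q.PS) (comotion Q.PS Q.cl a \<nu>) Rstat"
    by (rule Q.homo) (rule Q.K_Q, auto)
  then show ?thesis using PE CE by simp
next
  assume A: "P = Ua a \<and> col = colU a"
  interpret U: perm a "\<lambda>c. a - c" \<nu>
    by unfold_locales (use assms(2) in auto)
  have PE: "P = U.PS" using A unfolding U.PS_def Ua_def by auto
  have CE: "comotion P col a \<nu> = comotion P U.cl a \<nu>"
  proof (rule comotion_cong)
    fix k assume "k \<in> {1..a}"
    then have "\<nu> k \<le> a" using U.nu_in by auto
    then show "col (\<nu> k) = U.cl (\<nu> k)" using A unfolding colU_def U.cl_def by (simp add: Suc_diff_le)
  qed
  have "homomesic (ideals U.PS) (comotion U.PS U.cl a \<nu>) Rstat"
    by (rule U.homo) (rule U.K_U, auto)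
  then show ?thesis using PE CE by simp
qed

end
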